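(* Let $(\mathbb{T},G)$ be a minimal equicontinuous topological dynamical system, $\theta_0\in\mathbb{T}$, and $f$ a $K$-valued semicocycle over $(\mathbb{T},G,\theta_0)$. Let $[\theta]$ denote the $\sim$-class of $\theta$ and equip $\mathbb{T}/\!\sim$ with the induced action $g[\theta]=[g\theta]$. Then $(\mathbb{T}/\!\sim,G,[\theta_0])$ is a pointed minimal equicontinuous system, the map $\tilde f\colon G[\theta_0]\to K$, $g[\theta_0]\mapsto f(g\theta_0)$, is a well-defined $K$-valued semicocycle over $(\mathbb{T}/\!\sim,G,[\theta_0])$ which is invariant under no rotation, and $X_{\tilde f}=X_f$. In particular, $(X_f,G)$ is a semicocycle extension of $(\mathbb{T}/\!\sim,G)$.
   Context: $G$ is a topological group acting jointly continuously on a compact Hausdorff space; minimal means all orbits dense; equicontinuous means the family of translations is equicontinuous. $E(\mathbb{T})$ is the Ellis semigroup (closure of $\{\theta\mapsto g\theta\}$ in $\mathbb{T}^{\mathbb{T}}$, pointwise topology). $K$ is compact Hausdorff. A pointed system $(\mathbb{T},G,\theta_0)$ has $\overline{G\theta_0}=\mathbb{T}$; a $K$-valued semicocycle over it is a continuous $f\colon G\theta_0\to K$. $F=\overline{\operatorname{gr} f}\subseteq\mathbb{T}\times K$, $F(\theta)=\{k:(\theta,k)\in F\}$. Relation: $\theta_1\sim\theta_2$ iff $F(\xi\theta_1)=F(\xi\theta_2)$ for all $\xi\in E(\mathbb{T})$ (the analogous relation is defined for $\tilde f$ over $\mathbb{T}/\!\sim$ using $E(\mathbb{T}/\!\sim)$);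 $f$ is invariant under no rotation if $\sim$ is the identity. $G$ acts on $K^G$ (product topology) by $\sigma^h((x_g)_{g\in G})=(x_{gh})_{g\in G}$. Identifying $f$ with $(f(g\theta_0))_{g\in G}\in K^G$, $X_f$ is the closure of $\{\sigma^h f:h\in G\}$ in $K^G$, and $(X_f,G)$ carries the shift action. If $(\mathbb{T},G)$ is minimal equicontinuous and $f$ is invariant under no rotation, $(X_f,G)$ is called a semicocycle extension of $(\mathbb{T},G)$. *)

theory Defs
  imports "HOL-Analysis.Analysis"
begin

text \<open>Group G: a type of class topological_group_add (written additively, not
necessarily commutative), with its canonical topology euclidean.
Action: act g x, with act (g + h) x = act g (act h x).\<close>

definition tds :: "'a topology \<Rightarrow> ('g::topological_group_add \<Rightarrow> 'a \<Rightarrow> 'a) \<Rightarrow> bool" where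
  "tds X act \<longleftrightarrow> compact_space X \<and> Hausdorff_space X
     \<and> (\<forall>g x. x \<in> topspace X \<longrightarrow> act g x \<in> topspace X)
     \<and> (\<forall>x\<in>topspace X. act 0 x = x)
     \<and> (\<forall>g h x. x \<in> topspace X \<longrightarrow> act (g + h) x = act g (act h x))
     \<and> continuous_map (prod_topology euclidean X) X (\<lambda>(g, x). act g x)"

definition orbit :: "('g \<Rightarrow> 'a \<Rightarrow> 'a) \<Rightarrow> 'a \<Rightarrow> 'a set" where
  "orbit act x = range (\<lambda>g. act g x)"

definition minimal_action :: "'a topology \<Rightarrow> ('g \<Rightarrow> 'a \<Rightarrow> 'a) \<Rightarrow> bool" where
  "minimal_action X act \<longleftrightarrow> (\<forall>x\<in>topspace X. X closure_of orbit act x = topspace X)"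

text \<open>Equicontinuity w.r.t. the unique uniformity of a compact Hausdorff space,
whose entourages are the neighbourhoods of the diagonal.\<close>
definition equicontinuous_action :: "'a topology \<Rightarrow> ('g \<Rightarrow> 'a \<Rightarrow> 'a) \<Rightarrow> bool" where
  "equicontinuous_action X act \<longleftrightarrow>
     (\<forall>U. openin (prod_topology X X) U \<and> (\<forall>x\<in>topspace X. (x, x) \<in> U) \<longrightarrow>
        (\<exists>V. openin (prod_topology X X) V \<and> (\<forall>x\<in>topspace X. (x, x) \<in> V) \<and>
             (\<forall>g x y. (x, y) \<in> V \<longrightarrow> (act g x, act g y) \<in> U)))"

definition ellis :: "'a topology \<Rightarrow> ('g \<Rightarrow> 'a \<Rightarrow> 'a) \<Rightarrow> ('a \<Rightarrow> 'a) set" where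
  "ellis X act = (product_topology (\<lambda>_. X) (topspace X)) closure_of
                  {restrict (act g) (topspace X) | g. True}"

definition semicocycle ::
  "'a topology \<Rightarrow> 'k topology \<Rightarrow> ('g \<Rightarrow> 'a \<Rightarrow> 'a) \<Rightarrow> 'a \<Rightarrow> ('a \<Rightarrow> 'k) \<Rightarrow> bool" where
  "semicocycle X K act x0 f \<longleftrightarrow> x0 \<in> topspace X \<and> X closure_of orbit act x0 = topspace X
     \<and> continuous_map (subtopology X (orbit act x0)) K f"

definition graph_closure ::
  "'a topology \<Rightarrow> 'k topology \<Rightarrow> ('g \<Rightarrow> 'a \<Rightarrow> 'a) \<Rightarrow> 'a \<Rightarrow> ('a \<Rightarrow> 'k) \<Rightarrow> ('a \<times> 'k) set" where
  "graph_closure X K act x0 f = (prod_topology X K) closure_of ((\<lambda>x. (x, f x)) ` orbit act x0)"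

definition fiber :: "('a \<times> 'k) set \<Rightarrow> 'a \<Rightarrow> 'k set" where
  "fiber F x = {k. (x, k) \<in> F}"

definition sc_rel ::
  "'a topology \<Rightarrow> 'k topology \<Rightarrow> ('g \<Rightarrow> 'a \<Rightarrow> 'a) \<Rightarrow> 'a \<Rightarrow> ('a \<Rightarrow> 'k) \<Rightarrow> ('a \<times> 'a) set" where
  "sc_rel X K act x0 f = {(a, b). a \<in> topspace X \<and> b \<in> topspace X \<and>
      (\<forall>\<xi>\<in>ellis X act. fiber (graph_closure X K act x0 f) (\<xi> a)
                        = fiber (graph_closure X K act x0 f) (\<xi> b))}"

definition no_rotation ::
  "'a topology \<Rightarrow> 'k topology \<Rightarrow> ('g \<Rightarrow> 'a \<Rightarrow> 'a) \<Rightarrow> 'a \<Rightarrow> ('a \<Rightarrow> 'k) \<Rightarrow> bool" where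
  "no_rotation X K act x0 f \<longleftrightarrow> sc_rel X K act x0 f = Id_on (topspace X)"

definition quotient_topology :: "'a topology \<Rightarrow> ('a \<times> 'a) set \<Rightarrow> 'a set topology" where
  "quotient_topology X R = topology (\<lambda>U. U \<subseteq> topspace X // R \<and> openin X (\<Union>U))"

definition quotient_action :: "('a \<times> 'a) set \<Rightarrow> ('g \<Rightarrow> 'a \<Rightarrow> 'a) \<Rightarrow> 'g \<Rightarrow> 'a set \<Rightarrow> 'a set" where
  "quotient_action R act g c = (\<Union>x\<in>c. R `` {act g x})"

definition shift_orbit_closure :: "'k topology \<Rightarrow> ('g::group_add \<Rightarrow> 'k) \<Rightarrow> ('g \<Rightarrow> 'k) set" where
  "shift_orbit_closure K x = (product_topology (\<lambda>_. K) UNIV) closure_of {(\<lambda>g. x (g + h)) | h. True}"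

end

theory Submission
  imports Defs
begin


lemma closure_image_compact:
  assumes "continuous_map Y Z h" "compact_space Y" "Hausdorff_space Z" "S \<subseteq> topspace Y"
  shows "h ` (Y closure_of S) = Z closure_of (h ` S)"
proof
  show "h ` (Y closure_of S) \<subseteq> Z closure_of h ` S"
    by (rule continuous_map_image_closure_subset[OF assms(1)])
  have cm: "closed_map Y Z h" using continuous_imp_closed_map assms by blast
  then show "Z closure_of h ` S \<subseteq> h ` (Y closure_of S)"
    using assms(4) unfolding closed_map_closure_of_image by blast
qed



definition porb :: "('g \<Rightarrow> 'a \<Rightarrow> 'a) \<Rightarrow> 'a \<Rightarrow> 'a \<Rightarrow> ('a \<times> 'a) set" where
  "porb act a b = range (\<lambda>g. (act g a, act g b))"

definition Dc :: "'a topology \<Rightarrow> ('g \<Rightarrow> 'a \<Rightarrow> 'a) \<Rightarrow> 'a \<Rightarrow> 'a \<Rightarrow> ('a \<times> 'a) set" where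
  "Dc X act a b = prod_topology X X closure_of porb act a b"

lemma regular_shrink:
  assumes "regular_space X" "openin X A" "p \<in> A"
  shows "\<exists>W. openin X W \<and> p \<in> W \<and> X closure_of W \<subseteq> A"
proof -
  have "neighbourhood_base_of (closedin X) X" using assms(1) neighbourhood_base_of_closedin by blast
  then obtain U V where "openin X U" "closedin X V" "p \<in> U" "U \<subseteq> V" "V \<subseteq> A"
    using assms unfolding neighbourhood_base_of by metis
  then show ?thesis by (meson closure_of_minimal order_trans)
qed

lemma ellis_eval:
  assumes "compact_space X" "Hausdorff_space X" "\<And>g x. x \<in> topspace X \<Longrightarrow> act g x \<in> topspace X"
    and "a \<in> topspace X" "b \<in> topspace X"
  shows "(\<lambda>\<xi>. (\<xi> a, \<xi> b)) ` ellis X act = Dc X act a b"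
proof -
  let ?P = "product_topology (\<lambda>_. X) (topspace X)"
  let ?S = "{restrict (act g) (topspace X) | g. True}"
  have cont: "continuous_map ?P (prod_topology X X) (\<lambda>\<xi>. (\<xi> a, \<xi> b))"
    by (intro continuous_map_pairedI continuous_map_product_projection assms)
  have cp: "compact_space ?P" using assms(1) by (simp add: compact_space_product_topology)
  have HH: "Hausdorff_space (prod_topology X X)" using assms(2) Hausdorff_space_prod_topology by blast
  have "(\<lambda>\<xi>. (\<xi> a, \<xi> b)) ` (?P closure_of ?S) = prod_topology X X closure_of ((\<lambda>\<xi>. (\<xi> a, \<xi> b)) ` ?S)"
    by (rule closure_image_compact[OF cont cp HH]) (use assms(3) in \<open>auto simp: PiE_iff\<close>)
  moreover have "(\<lambda>\<xi>. (\<xi> a, \<xi> b)) ` ?S = porb act a b"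
  proof
    show "(\<lambda>\<xi>. (\<xi> a, \<xi> b)) ` ?S \<subseteq> porb act a b" using assms(4,5) unfolding porb_def by auto
    show "porb act a b \<subseteq> (\<lambda>\<xi>. (\<xi> a, \<xi> b)) ` ?S"
    proof
      fix z assume "z \<in> porb act a b"
      then obtain g where z: "z = (act g a, act g b)" unfolding porb_def by auto
      have "restrict (act g) (topspace X) \<in> ?S" by blast
      moreover have "z = (\<lambda>\<xi>. (\<xi> a, \<xi> b)) (restrict (act g) (topspace X))" using z assms(4,5) by simp
      ultimately show "z \<in> (\<lambda>\<xi>. (\<xi> a, \<xi> b)) ` ?S" by blast
    qed
  qed
  ultimately show ?thesis unfolding ellis_def Dc_def by simp
qed

lemma sc_rel_char:
  assumes "compact_space X" "Hausdorff_space X" "\<And>g x. x \<in> topspace X \<Longrightarrow> act g x \<in> topspace X"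
  shows "sc_rel X K act x0 f = {(a,b). a \<in> topspace X \<and> b \<in> topspace X \<and>
     (\<forall>(p,q)\<in>Dc X act a b. fiber (graph_closure X K act x0 f) p = fiber (graph_closure X K act x0 f) q)}"
proof -
  { fix a b assume ab: "a \<in> topspace X" "b \<in> topspace X"
    have e: "(\<lambda>\<xi>. (\<xi> a, \<xi> b)) ` ellis X act = Dc X act a b"
      using ellis_eval[OF assms ab] .
    have "(\<forall>\<xi>\<in>ellis X act. fiber (graph_closure X K act x0 f) (\<xi> a) = fiber (graph_closure X K act x0 f) (\<xi> b))
      \<longleftrightarrow> (\<forall>(p,q)\<in>Dc X act a b. fiber (graph_closure X K act x0 f) p = fiber (graph_closure X K act x0 f) q)"
      unfolding e[symmetric] by auto }
  then show ?thesis unfolding sc_rel_def by (intro set_eqI) (smt (verit) case_prodE mem_Collect_eq prod.simps(2))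
qed




locale eqsys =
  fixes X :: "'a topology" and act :: "'g::topological_group_add \<Rightarrow> 'a \<Rightarrow> 'a"
  assumes tds: "tds X act" and eqc: "equicontinuous_action X act"
begin

abbreviation "T \<equiv> topspace X"
abbreviation "XX \<equiv> prod_topology X X"

lemma cpt: "compact_space X" and haus: "Hausdorff_space X"
  and act_in: "x \<in> T \<Longrightarrow> act g x \<in> T"
  and act0: "x \<in> T \<Longrightarrow> act 0 x = x"
  and act_add: "x \<in> T \<Longrightarrow> act (g + h) x = act g (act h x)"
  and jcont: "continuous_map (prod_topology euclidean X) X (\<lambda>(g, x). act g x)"
  using tds unfolding tds_def by auto

lemma act_inv: "x \<in> T \<Longrightarrow> act (-g) (act g x) = x"
  by (metis act0 act_add add.left_inverse)

lemma cont_act: "continuous_map X X (act g)"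
proof -
  have "continuous_map X (prod_topology euclidean X) (\<lambda>x. (g, x))"
    by (intro continuous_map_pairedI) (auto simp: continuous_map_id[unfolded id_def])
  from continuous_map_compose[OF this jcont] show ?thesis by (simp add: o_def)
qed

lemma cpt2: "compact_space XX" using cpt by (simp add: compact_space_prod_topology)
lemma haus2: "Hausdorff_space XX" using haus by (simp add: Hausdorff_space_prod_topology)
lemma reg: "regular_space X" using cpt haus compact_Hausdorff_imp_regular_space by blast

lemma porb_sub: "a \<in> T \<Longrightarrow> b \<in> T \<Longrightarrow> porb act a b \<subseteq> T \<times> T"
  unfolding porb_def using act_in by auto

lemma D_sub: "Dc X act a b \<subseteq> T \<times> T"
  unfolding Dc_def using closure_of_subset_topspace by fastforce

lemma D_closed: "closedin XX (Dc X act a b)" unfolding Dc_def by simp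

lemma D_self: "a \<in> T \<Longrightarrow> b \<in> T \<Longrightarrow> (a,b) \<in> Dc X act a b"
proof -
  assume ab: "a \<in> T" "b \<in> T"
  have "(a,b) \<in> porb act a b" unfolding porb_def using ab by (auto simp: act0 intro!: image_eqI[where x=0])
  then show ?thesis unfolding Dc_def using closure_of_subset[of "porb act a b" XX] porb_sub[OF ab] by auto
qed

lemma D_inv:
  assumes "a \<in> T" "b \<in> T" "(u,v) \<in> Dc X act a b"
  shows "(act g u, act g v) \<in> Dc X act a b"
proof -
  have c: "continuous_map XX XX (\<lambda>(x,y). (act g x, act g y))"
    unfolding case_prod_unfold
    by (intro continuous_map_pairedI continuous_map_compose[OF continuous_map_fst cont_act, unfolded o_def]
        continuous_map_compose[OF continuous_map_snd cont_act, unfolded o_def])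
  have "(\<lambda>(x,y). (act g x, act g y)) ` porb act a b \<subseteq> porb act a b"
    unfolding porb_def using assms(1,2) by (auto simp: act_add[symmetric])
  then have "(\<lambda>(x,y). (act g x, act g y)) ` Dc X act a b \<subseteq> Dc X act a b"
    unfolding Dc_def using continuous_map_image_closure_subset[OF c, of "porb act a b"] closure_of_mono
    by (meson order_trans)
  then show ?thesis using assms(3) by force
qed

lemma D_trans:
  assumes "a \<in> T" "b \<in> T" "(u,v) \<in> Dc X act a b"
  shows "Dc X act u v \<subseteq> Dc X act a b"
  unfolding Dc_def[of X act u v]
proof (rule closure_of_minimal[OF _ D_closed])
  show "porb act u v \<subseteq> Dc X act a b" unfolding porb_def using D_inv[OF assms] by auto
qed

lemma ent_point:
  assumes "x \<in> T" "openin X A" "x \<in> A"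
  shows "\<exists>U. openin XX U \<and> (\<forall>z\<in>T. (z,z) \<in> U) \<and> (\<forall>y. (x,y) \<in> U \<longrightarrow> y \<in> A)"
proof -
  let ?U = "T \<times> T - ({x} \<times> (T - A) \<union> (T - A) \<times> {x})"
  have c1: "closedin XX ({x} \<times> (T - A))"
    using assms haus by (simp add: closedin_prod_Times_iff closedin_Hausdorff_singleton closedin_diff)
  have c2: "closedin XX ((T - A) \<times> {x})"
    using assms haus by (simp add: closedin_prod_Times_iff closedin_Hausdorff_singleton closedin_diff)
  have "openin XX ?U" using closedin_Un[OF c1 c2] by (metis openin_diff openin_topspace topspace_prod_topology)
  moreover have "\<forall>z\<in>T. (z,z) \<in> ?U" using assms by blast
  moreover have "\<forall>y. (x,y) \<in> ?U \<longrightarrow> y \<in> A" by blast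
  ultimately show ?thesis by blast
qed

lemma ent_closed:
  assumes "p \<in> T" "openin X A" "p \<in> A"
  shows "\<exists>W U. openin X W \<and> p \<in> W \<and> openin XX U \<and> (\<forall>z\<in>T. (z,z) \<in> U)
     \<and> (\<forall>s t. (s,t) \<in> XX closure_of U \<longrightarrow> s \<in> W \<longrightarrow> t \<in> A)"
proof -
  obtain W1 where W1: "openin X W1" "p \<in> W1" "X closure_of W1 \<subseteq> A" using regular_shrink[OF reg assms(2,3)] by blast
  obtain W where W: "openin X W" "p \<in> W" "X closure_of W \<subseteq> W1" using regular_shrink[OF reg W1(1,2)] by blast
  define U where "U = W1 \<times> W1 \<union> (T - X closure_of W) \<times> (T - X closure_of W)"
  have o1: "openin XX (W1 \<times> W1)" using W1 by (simp add: openin_prod_Times_iff)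
  have o2: "openin XX ((T - X closure_of W) \<times> (T - X closure_of W))"
    by (simp add: openin_prod_Times_iff openin_diff)
  have oU: "openin XX U" unfolding U_def using o1 o2 by (rule openin_Un)
  have dU: "\<forall>z\<in>T. (z,z) \<in> U" unfolding U_def using W by blast
  have Wsub: "W \<subseteq> T" using W(1) openin_subset by blast
  have "X closure_of (T - X closure_of W) \<subseteq> T - W"
  proof (rule closure_of_minimal)
    show "T - X closure_of W \<subseteq> T - W" using closure_of_subset[OF Wsub] by blast
    show "closedin X (T - W)" using W(1) by (simp add: closedin_diff)
  qed
  then have cU: "XX closure_of U \<subseteq> (X closure_of W1) \<times> (X closure_of W1) \<union> (T - W) \<times> (T - W)"
    unfolding U_def closure_of_Un closure_of_Times by blast
  have "\<forall>s t. (s,t) \<in> XX closure_of U \<longrightarrow> s \<in> W \<longrightarrow> t \<in> A"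
  proof (intro allI impI)
    fix s t assume "(s,t) \<in> XX closure_of U" "s \<in> W"
    then have "(s,t) \<in> (X closure_of W1) \<times> (X closure_of W1)" using cU by blast
    then show "t \<in> A" using W1(3) by blast
  qed
  then show ?thesis using W oU dU by blast
qed

lemma box_at:
  assumes "openin (prod_topology Y Z) N" "(y,z) \<in> N"
  obtains A B where "openin Y A" "openin Z B" "y \<in> A" "z \<in> B" "A \<times> B \<subseteq> N"
proof -
  have "\<forall>x y. (x,y) \<in> N \<longrightarrow> (\<exists>A B. openin Y A \<and> openin Z B \<and> x \<in> A \<and> y \<in> B \<and> A \<times> B \<subseteq> N)"
    using iffD1[OF openin_prod_topology_alt assms(1)] by metis
  then have "\<exists>A B. openin Y A \<and> openin Z B \<and> y \<in> A \<and> z \<in> B \<and> A \<times> B \<subseteq> N" using assms(2) by blast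
  then show ?thesis using that by blast
qed

lemma equi_get:
  assumes "openin XX U" "\<forall>z\<in>T. (z,z) \<in> U"
  obtains V where "openin XX V" "\<forall>z\<in>T. (z,z) \<in> V" "\<And>g x y. (x,y) \<in> V \<Longrightarrow> (act g x, act g y) \<in> U"
proof -
  have H: "\<forall>U. openin XX U \<and> (\<forall>x\<in>T. (x,x) \<in> U) \<longrightarrow> (\<exists>V. openin XX V \<and> (\<forall>x\<in>T. (x,x) \<in> V) \<and>
             (\<forall>g x y. (x, y) \<in> V \<longrightarrow> (act g x, act g y) \<in> U))"
    using eqc unfolding equicontinuous_action_def by metis
  have "\<exists>V. openin XX V \<and> (\<forall>x\<in>T. (x,x) \<in> V) \<and> (\<forall>g x y. (x, y) \<in> V \<longrightarrow> (act g x, act g y) \<in> U)"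
    using H assms by blast
  then show ?thesis using that by blast
qed

lemma D_min:
  assumes "a \<in> T" "b \<in> T" "(u,v) \<in> Dc X act a b"
  shows "(a,b) \<in> Dc X act u v"
  unfolding Dc_def in_closure_of
proof (intro conjI allI impI)
  have uv: "u \<in> T" "v \<in> T" using D_sub assms(3) by auto
  show "(a,b) \<in> topspace XX" using assms by simp
  fix N assume N: "(a,b) \<in> N \<and> openin XX N"
  then have N1: "openin XX N" and N2: "(a,b) \<in> N" by auto
  obtain A B where AB: "openin X A" "openin X B" "a \<in> A" "b \<in> B" "A \<times> B \<subseteq> N"
    by (rule box_at[OF N1 N2])
  obtain Ua where Ua: "openin XX Ua" "\<forall>z\<in>T. (z,z) \<in> Ua" "\<forall>y. (a,y) \<in> Ua \<longrightarrow> y \<in> A"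
    using ent_point[OF assms(1) AB(1,3)] by blast
  obtain Ub where Ub: "openin XX Ub" "\<forall>z\<in>T. (z,z) \<in> Ub" "\<forall>y. (b,y) \<in> Ub \<longrightarrow> y \<in> B"
    using ent_point[OF assms(2) AB(2,4)] by blast
  have "openin XX (Ua \<inter> Ub)" using Ua(1) Ub(1) by (rule openin_Int)
  moreover have "\<forall>z\<in>T. (z,z) \<in> Ua \<inter> Ub" using Ua(2) Ub(2) by blast
  ultimately obtain V where V: "openin XX V" "\<forall>z\<in>T. (z,z) \<in> V"
      "\<And>g x y. (x,y) \<in> V \<Longrightarrow> (act g x, act g y) \<in> Ua \<inter> Ub"
    by (rule equi_get) blast
  have uu: "(u,u) \<in> V" using V(2) uv by blast
  obtain P1 P1' where P1: "openin X P1" "openin X P1'" "u \<in> P1" "u \<in> P1'" "P1 \<times> P1' \<subseteq> V"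
    by (rule box_at[OF V(1) uu])
  have vv: "(v,v) \<in> V" using V(2) uv by blast
  obtain P2 P2' where P2: "openin X P2" "openin X P2'" "v \<in> P2" "v \<in> P2'" "P2 \<times> P2' \<subseteq> V"
    by (rule box_at[OF V(1) vv])
  have o: "openin XX (P1 \<times> P2)" using P1(1) P2(1) by (simp add: openin_prod_Times_iff)
  have "(u,v) \<in> P1 \<times> P2" using P1 P2 by blast
  moreover have "(u,v) \<in> XX closure_of porb act a b" using assms(3) unfolding Dc_def .
  ultimately obtain z where z: "z \<in> porb act a b" "z \<in> P1 \<times> P2"
    using o in_closure_of by metis
  then obtain h where h: "act h a \<in> P1" "act h b \<in> P2" unfolding porb_def by auto
  have "(act h a, u) \<in> V" using h(1) P1(4,5) by blast
  then have "(act (-h) (act h a), act (-h) u) \<in> Ua" using V(3)[of "act h a" u "-h"] by blast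
  then have 1: "act (-h) u \<in> A" using Ua(3) act_inv[OF assms(1), of h] by metis
  have "(act h b, v) \<in> V" using h(2) P2(4,5) by blast
  then have "(act (-h) (act h b), act (-h) v) \<in> Ub" using V(3)[of "act h b" v "-h"] by blast
  then have 2: "act (-h) v \<in> B" using Ub(3) act_inv[OF assms(2), of h] by metis
  have "(act (-h) u, act (-h) v) \<in> N" using 1 2 AB(5) by blast
  moreover have "(act (-h) u, act (-h) v) \<in> porb act u v" unfolding porb_def by blast
  ultimately show "\<exists>y. y \<in> porb act u v \<and> y \<in> N" by blast
qed

end



lemma cm_ff [continuous_intros]: "continuous_map (prod_topology (prod_topology X Y) Z) X (\<lambda>w. fst (fst w))"
  using continuous_map_compose[OF continuous_map_fst continuous_map_fst] by (simp add: comp_def)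
lemma cm_sf [continuous_intros]: "continuous_map (prod_topology (prod_topology X Y) Z) Y (\<lambda>w. snd (fst w))"
  using continuous_map_compose[OF continuous_map_fst continuous_map_snd] by (simp add: comp_def)
lemma cm_fs [continuous_intros]: "continuous_map (prod_topology Z (prod_topology X Y)) X (\<lambda>w. fst (snd w))"
  using continuous_map_compose[OF continuous_map_snd continuous_map_fst] by (simp add: comp_def)
lemma cm_ss [continuous_intros]: "continuous_map (prod_topology Z (prod_topology X Y)) Y (\<lambda>w. snd (snd w))"
  using continuous_map_compose[OF continuous_map_snd continuous_map_snd] by (simp add: comp_def)

lemma cm_test1: "continuous_map (prod_topology (prod_topology A B) (prod_topology C D)) (prod_topology A C) (\<lambda>w. (fst (fst w), fst (snd w)))"
  by (intro continuous_intros)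
lemma cm_test2: "continuous_map (prod_topology (prod_topology A B) C) (prod_topology (prod_topology A B) (prod_topology A C)) (\<lambda>w. (fst w, (fst (fst w), snd w)))"
  by (intro continuous_intros)




context eqsys begin

lemma cpt4: "compact_space (prod_topology XX XX)" using cpt2 by (simp add: compact_space_prod_topology)

lemma transfer:
  assumes "x \<in> T" "y \<in> T" "x' \<in> T" "y' \<in> T"
    "\<forall>g. (act g x, act g x') \<in> U1" "\<forall>g. (act g y, act g y') \<in> U2" "(p,q) \<in> Dc X act x y"
  shows "\<exists>p' q'. (p',q') \<in> Dc X act x' y' \<and> (p,p') \<in> XX closure_of U1 \<and> (q,q') \<in> XX closure_of U2"
proof -
  let ?Y = "prod_topology XX XX"
  define S where "S = range (\<lambda>g. ((act g x, act g y), (act g x', act g y')))"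
  have Ssub: "S \<subseteq> topspace ?Y" unfolding S_def using act_in assms(1-4) by auto
  have e1: "fst ` (?Y closure_of S) = XX closure_of (fst ` S)"
    by (rule closure_image_compact[OF continuous_map_fst cpt4 haus2 Ssub])
  have f1: "fst ` S = porb act x y" unfolding S_def porb_def image_image by simp
  have "(p,q) \<in> fst ` (?Y closure_of S)" using assms(7) unfolding Dc_def e1 f1 .
  then obtain w where w: "w \<in> ?Y closure_of S" "fst w = (p,q)" by auto
  obtain p' q' where w2: "snd w = (p',q')" by (cases "snd w")
  have sw: "snd w \<in> XX closure_of (snd ` S)"
    using continuous_map_image_closure_subset[OF continuous_map_snd[of XX XX], of S] imageI[OF w(1), of snd] by (rule subsetD)
  moreover have "snd ` S = porb act x' y'" unfolding S_def porb_def image_image by simp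
  ultimately have "snd w \<in> Dc X act x' y'" unfolding Dc_def by simp
  then have 1: "(p',q') \<in> Dc X act x' y'" using w2 by simp
  have c13: "continuous_map ?Y XX (\<lambda>w. (fst (fst w), fst (snd w)))" by (intro continuous_intros)
  have "(\<lambda>w. (fst (fst w), fst (snd w))) ` S \<subseteq> U1" unfolding S_def using assms(5) by auto
  then have "(\<lambda>w. (fst (fst w), fst (snd w))) ` (?Y closure_of S) \<subseteq> XX closure_of U1"
    using continuous_map_image_closure_subset[OF c13, of S] closure_of_mono by (meson order_trans)
  then have "(fst (fst w), fst (snd w)) \<in> XX closure_of U1" using imageI[OF w(1), of "\<lambda>w. (fst (fst w), fst (snd w))"] by (rule subsetD)
  then have 2: "(p,p') \<in> XX closure_of U1" using w(2) w2 by simp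
  have c24: "continuous_map ?Y XX (\<lambda>w. (snd (fst w), snd (snd w)))" by (intro continuous_intros)
  have "(\<lambda>w. (snd (fst w), snd (snd w))) ` S \<subseteq> U2" unfolding S_def using assms(6) by auto
  then have "(\<lambda>w. (snd (fst w), snd (snd w))) ` (?Y closure_of S) \<subseteq> XX closure_of U2"
    using continuous_map_image_closure_subset[OF c24, of S] closure_of_mono by (meson order_trans)
  then have "(snd (fst w), snd (snd w)) \<in> XX closure_of U2" using imageI[OF w(1), of "\<lambda>w. (snd (fst w), snd (snd w))"] by (rule subsetD)
  then have 3: "(q,q') \<in> XX closure_of U2" using w(2) w2 by simp
  show ?thesis using 1 2 3 by blast
qed

end


context eqsys begin
definition "Dset = {w. fst (fst w) \<in> T \<and> snd (fst w) \<in> T \<and> snd w \<in> Dc X act (fst (fst w)) (snd (fst w))}"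

lemma Dset_closed: "closedin (prod_topology XX XX) Dset"
proof -
  let ?Y = "prod_topology XX XX"
  have sub: "Dset \<subseteq> topspace ?Y" unfolding Dset_def using D_sub by force
  have "openin ?Y (topspace ?Y - Dset)"
  proof (subst openin_subopen, intro ballI)
    fix w assume w: "w \<in> topspace ?Y - Dset"
    obtain x y p q where wq: "w = ((x,y),(p,q))" by (metis prod.collapse)
    have xy: "x\<in>T" "y\<in>T" "p\<in>T" "q\<in>T" using w wq by auto
    have nd: "(p,q) \<notin> Dc X act x y" using w wq xy unfolding Dset_def by auto
    have op: "openin XX (topspace XX - Dc X act x y)" using D_closed by (simp add: closedin_def)
    have pq: "(p,q) \<in> topspace XX - Dc X act x y" using xy nd by simp
    obtain A B where AB: "openin X A" "openin X B" "p\<in>A" "q\<in>B" "A \<times> B \<subseteq> topspace XX - Dc X act x y"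
      by (rule box_at[OF op pq])
    obtain Wa Ua where Wa: "openin X Wa" "p \<in> Wa" "openin XX Ua" "\<forall>z\<in>T. (z,z) \<in> Ua"
       "\<forall>s t. (s,t) \<in> XX closure_of Ua \<longrightarrow> s \<in> Wa \<longrightarrow> t \<in> A"
      using ent_closed[OF xy(3) AB(1,3)] by blast
    obtain Wb Ub where Wb: "openin X Wb" "q \<in> Wb" "openin XX Ub" "\<forall>z\<in>T. (z,z) \<in> Ub"
       "\<forall>s t. (s,t) \<in> XX closure_of Ub \<longrightarrow> s \<in> Wb \<longrightarrow> t \<in> B"
      using ent_closed[OF xy(4) AB(2,4)] by blast
    have oU: "openin XX (Ua \<inter> Ub)" using Wa(3) Wb(3) by (rule openin_Int)
    have dU: "\<forall>z\<in>T. (z,z) \<in> Ua \<inter> Ub" using Wa(4) Wb(4) by blast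
    obtain V where V: "openin XX V" "\<forall>z\<in>T. (z,z) \<in> V"
      "\<And>g x y. (x,y) \<in> V \<Longrightarrow> (act g x, act g y) \<in> Ua \<inter> Ub"
      by (rule equi_get[OF oU dU]) blast
    have xx: "(x,x) \<in> V" using V(2) xy by blast
    obtain P1 P1' where P1: "openin X P1" "openin X P1'" "x \<in> P1" "x \<in> P1'" "P1 \<times> P1' \<subseteq> V"
      by (rule box_at[OF V(1) xx])
    have yy: "(y,y) \<in> V" using V(2) xy by blast
    obtain P2 P2' where P2: "openin X P2" "openin X P2'" "y \<in> P2" "y \<in> P2'" "P2 \<times> P2' \<subseteq> V"
      by (rule box_at[OF V(1) yy])
    define N where "N = (P1 \<times> P2) \<times> (Wa \<times> Wb)"
    have oN: "openin ?Y N" unfolding N_def using P1 P2 Wa Wb by (simp add: openin_prod_Times_iff)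
    have wN: "w \<in> N" unfolding N_def wq using P1 P2 Wa Wb by simp
    have "N \<subseteq> topspace ?Y - Dset"
    proof
      fix z assume z: "z \<in> N"
      obtain x' y' p' q' where zq: "z = ((x',y'),(p',q'))" by (metis prod.collapse)
      have zz: "x' \<in> P1" "y' \<in> P2" "p' \<in> Wa" "q' \<in> Wb" using z zq unfolding N_def by auto
      have zT: "x' \<in> T" "y' \<in> T" "p' \<in> T" "q' \<in> T"
        using zz P1(1) P2(1) Wa(1) Wb(1) openin_subset by blast+
      show "z \<in> topspace ?Y - Dset"
      proof
        show "z \<in> topspace ?Y" using zT zq by simp
        show "z \<notin> Dset"
        proof
          assume "z \<in> Dset"
          then have d: "(p',q') \<in> Dc X act x' y'" unfolding Dset_def zq by simp
          have g1: "\<forall>g. (act g x', act g x) \<in> Ua" using V(3) P1 zz by blast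
          have g2: "\<forall>g. (act g y', act g y) \<in> Ub" using V(3) P2 zz by blast
          obtain p'' q'' where t: "(p'',q'') \<in> Dc X act x y" "(p',p'') \<in> XX closure_of Ua"
              "(q',q'') \<in> XX closure_of Ub"
            using transfer[OF zT(1,2) xy(1,2) g1 g2 d] by blast
          have "p'' \<in> A" using Wa(5) t(2) zz(3) by blast
          moreover have "q'' \<in> B" using Wb(5) t(3) zz(4) by blast
          ultimately show False using AB(5) t(1) by blast
        qed
      qed
    qed
    then show "\<exists>N. openin ?Y N \<and> w \<in> N \<and> N \<subseteq> topspace ?Y - Dset" using oN wN by blast
  qed
  then show ?thesis using sub by (simp add: closedin_def)
qed

end



lemma cm_constI [continuous_intros]: "c \<in> topspace Y \<Longrightarrow> continuous_map X Y (\<lambda>x. c)"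
  by simp

context eqsys begin

definition "Rp F = {(a,b). a \<in> T \<and> b \<in> T \<and> (\<forall>(p,q)\<in>Dc X act a b. fiber F p = fiber F q)}"

lemma Rp_sat: assumes "(a,b) \<in> Rp F" "(u,v) \<in> Dc X act a b" shows "(u,v) \<in> Rp F"
proof -
  have ab: "a \<in> T" "b \<in> T" using assms(1) unfolding Rp_def by auto
  have uv: "u \<in> T" "v \<in> T" using D_sub assms(2) by auto
  have "Dc X act u v \<subseteq> Dc X act a b" by (rule D_trans[OF ab assms(2)])
  then show ?thesis using assms(1) uv unfolding Rp_def by blast
qed

lemma swap_cont: "continuous_map XX XX (\<lambda>z. (snd z, fst z))" by (intro continuous_intros)

lemma Dc_swap: assumes "(p,q) \<in> Dc X act a b" shows "(q,p) \<in> Dc X act b a"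
proof -
  have "(\<lambda>z. (snd z, fst z)) ` porb act a b = porb act b a" unfolding porb_def image_image by simp
  moreover have "(snd (p,q), fst (p,q)) \<in> XX closure_of ((\<lambda>z. (snd z, fst z)) ` porb act a b)"
    using continuous_map_image_closure_subset[OF swap_cont, of "porb act a b"]
      imageI[OF assms[unfolded Dc_def], of "\<lambda>z. (snd z, fst z)"] by (rule subsetD)
  ultimately show ?thesis unfolding Dc_def by simp
qed

lemma Rp_sym: assumes "(a,b) \<in> Rp F" shows "(b,a) \<in> Rp F"
  using assms Dc_swap unfolding Rp_def by fastforce

lemma clRp_sym: assumes "(a,b) \<in> XX closure_of Rp F" shows "(b,a) \<in> XX closure_of Rp F"
proof -
  have "(\<lambda>z. (snd z, fst z)) ` Rp F \<subseteq> Rp F" using Rp_sym by force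
  moreover have "(snd (a,b), fst (a,b)) \<in> XX closure_of ((\<lambda>z. (snd z, fst z)) ` Rp F)"
    using continuous_map_image_closure_subset[OF swap_cont, of "Rp F"]
      imageI[OF assms, of "\<lambda>z. (snd z, fst z)"] by (rule subsetD)
  ultimately show ?thesis using closure_of_mono by fastforce
qed

lemma diag_closed: "closedin XX ((\<lambda>x. (x,x)) ` T)"
  using haus Hausdorff_space_closedin_diagonal by blast

lemma step2:
  assumes Fc: "closedin (prod_topology X K) F" and a: "a \<in> T"
    and ac: "(a,c) \<in> XX closure_of {z \<in> Rp F. fst z = a}"
    and pq: "(p,q) \<in> Dc X act a c" and k: "k \<in> fiber F p"
  shows "k \<in> fiber F q"
proof (rule ccontr)
  assume nk: "k \<notin> fiber F q"
  have "(a,c) \<in> T \<times> T" using closure_of_subset_topspace ac by (metis subsetD topspace_prod_topology)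
  then have cT: "c \<in> T" by simp
  have pqT: "p \<in> T" "q \<in> T" using pq D_sub by auto
  have pk: "(p,k) \<in> F" using k unfolding fiber_def by simp
  have kK: "k \<in> topspace K" using pk closedin_subset[OF Fc] by auto
  have op: "openin (prod_topology X K) (topspace (prod_topology X K) - F)" using Fc by (simp add: closedin_def)
  have qk: "(q,k) \<in> topspace (prod_topology X K) - F" using nk pqT kK unfolding fiber_def by simp
  obtain Nq Nk where N: "openin X Nq" "openin K Nk" "q \<in> Nq" "k \<in> Nk" "Nq \<times> Nk \<subseteq> topspace (prod_topology X K) - F"
    by (rule box_at[OF op qk])
  obtain W U where WU: "openin X W" "q \<in> W" "openin XX U" "\<forall>z\<in>T. (z,z) \<in> U"
       "\<forall>s t. (s,t) \<in> XX closure_of U \<longrightarrow> s \<in> W \<longrightarrow> t \<in> Nq"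
    using ent_closed[OF pqT(2) N(1,3)] by blast
  obtain V where V: "openin XX V" "\<forall>z\<in>T. (z,z) \<in> V" "\<And>g x y. (x,y) \<in> V \<Longrightarrow> (act g x, act g y) \<in> U"
    by (rule equi_get[OF WU(3,4)]) blast
  have cc: "(c,c) \<in> V" using V(2) cT by blast
  obtain P1 P2 where P: "openin X P1" "openin X P2" "c \<in> P1" "c \<in> P2" "P1 \<times> P2 \<subseteq> V"
    by (rule box_at[OF V(1) cc])
  have oTP: "openin XX (T \<times> P2)" using P(2) by (simp add: openin_prod_Times_iff)
  have acP: "(a,c) \<in> T \<times> P2" using a P(4) by simp
  have allT: "\<forall>T'. (a,c) \<in> T' \<and> openin XX T' \<longrightarrow> (\<exists>y. y \<in> {z \<in> Rp F. fst z = a} \<and> y \<in> T')"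
    using iffD1[OF in_closure_of ac] by (rule conjunct2)
  have "\<exists>y. y \<in> {z \<in> Rp F. fst z = a} \<and> y \<in> T \<times> P2" using mp[OF spec[OF allT, of "T \<times> P2"] conjI[OF acP oTP]] .
  then obtain z where z: "z \<in> {z \<in> Rp F. fst z = a}" "z \<in> T \<times> P2" by (elim exE conjE)
  define c' where "c' = snd z"
  have fz: "fst z = a" "z \<in> Rp F" using z(1) by simp_all
  have zc: "z = (a,c')" unfolding c'_def using fz(1) by (metis prod.collapse)
  have Rac: "(a,c') \<in> Rp F" using fz(2) zc by simp
  have c'P: "c' \<in> P2" using z(2) zc by simp
  have c'T: "c' \<in> T" using Rac unfolding Rp_def by simp
  have g1: "\<forall>g. (act g a, act g a) \<in> (\<lambda>x. (x,x)) ` T" using act_in a by blast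
  have g2: "\<forall>g. (act g c, act g c') \<in> U" using V(3) P(3,5) c'P by blast
  obtain p' q' where t: "(p',q') \<in> Dc X act a c'" "(p,p') \<in> XX closure_of ((\<lambda>x. (x,x)) ` T)"
      "(q,q') \<in> XX closure_of U"
    using transfer[OF a cT a c'T g1 g2 pq] by blast
  have "p' = p" using t(2) closure_of_closedin[OF diag_closed] by auto
  then have "fiber F p = fiber F q'" using Rac t(1) unfolding Rp_def by auto
  then have "(q',k) \<in> F" using k unfolding fiber_def by simp
  moreover have "q' \<in> Nq" using WU(5) t(3) WU(2) by blast
  ultimately show False using N(4,5) by blast
qed

end

locale eqmin = eqsys + assumes minl: "minimal_action X act"
begin

lemma fst_D:
  assumes "a \<in> T" "b \<in> T" "z \<in> T"
  shows "\<exists>c. (z,c) \<in> Dc X act a b"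
proof -
  have "fst ` Dc X act a b = X closure_of (fst ` porb act a b)"
    unfolding Dc_def by (rule closure_image_compact[OF continuous_map_fst[of X X] cpt2 haus]) (simp add: porb_sub assms)
  also have "fst ` porb act a b = orbit act a" unfolding porb_def orbit_def image_image by simp
  also have "X closure_of orbit act a = T" using minl assms(1) unfolding minimal_action_def by blast
  finally show ?thesis using assms(3) by force
qed

lemma step1:
  assumes ab: "(a,b) \<in> XX closure_of Rp F"
  shows "\<exists>c. (a,c) \<in> Dc X act a b \<and> (a,c) \<in> XX closure_of {z \<in> Rp F. fst z = a}"
proof -
  let ?Y = "prod_topology XX X"
  have "(a,b) \<in> T \<times> T" using closure_of_subset_topspace ab by (metis subsetD topspace_prod_topology)
  then have abT: "a \<in> T" "b \<in> T" by auto
  define P where "P = {w \<in> topspace ?Y. fst w \<in> Rp F \<and> (a, snd w) \<in> Dc X act (fst (fst w)) (snd (fst w))}"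
  have Psub: "P \<subseteq> topspace ?Y" unfolding P_def by blast
  have fP: "fst ` P = Rp F"
  proof
    show "fst ` P \<subseteq> Rp F" unfolding P_def by auto
    show "Rp F \<subseteq> fst ` P"
    proof
      fix z assume z: "z \<in> Rp F"
      obtain x y where zq: "z = (x,y)" by (cases z)
      have xy: "x \<in> T" "y \<in> T" using z zq unfolding Rp_def by auto
      obtain c where c: "(a,c) \<in> Dc X act x y" using fst_D[OF xy abT(1)] by blast
      have cT: "c \<in> T" using c D_sub by auto
      have "(z,c) \<in> P" unfolding P_def using z zq xy cT c by simp
      then show "z \<in> fst ` P" by force
    qed
  qed
  have cY: "compact_space ?Y" using cpt2 cpt by (simp add: compact_space_prod_topology)
  have "fst ` (?Y closure_of P) = XX closure_of (fst ` P)"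
    by (rule closure_image_compact[OF continuous_map_fst cY haus2 Psub])
  then have "(a,b) \<in> fst ` (?Y closure_of P)" using ab fP by simp
  then obtain w where w: "w \<in> ?Y closure_of P" "fst w = (a,b)" by auto
  define c where "c = snd w"
  define \<psi> where "\<psi> = (\<lambda>w::('a\<times>'a)\<times>'a. (fst w, (a, snd w)))"
  have cpsi: "continuous_map ?Y (prod_topology XX XX) \<psi>" unfolding \<psi>_def using abT(1) by (intro continuous_intros)
  have Cc: "closedin ?Y {w \<in> topspace ?Y. \<psi> w \<in> Dset}"
    by (rule closedin_continuous_map_preimage[OF cpsi Dset_closed])
  have "P \<subseteq> {w \<in> topspace ?Y. \<psi> w \<in> Dset}"
    unfolding P_def \<psi>_def Dset_def Rp_def by auto
  then have "?Y closure_of P \<subseteq> {w \<in> topspace ?Y. \<psi> w \<in> Dset}" using Cc by (rule closure_of_minimal)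
  then have "\<psi> w \<in> Dset" using w(1) by blast
  then have 1: "(a,c) \<in> Dc X act a b" unfolding \<psi>_def Dset_def c_def using w(2) by simp
  define \<phi> where "\<phi> = (\<lambda>w::('a\<times>'a)\<times>'a. (a, snd w))"
  have cphi: "continuous_map ?Y XX \<phi>" unfolding \<phi>_def using abT(1) by (intro continuous_intros)
  have "\<phi> ` P \<subseteq> {z \<in> Rp F. fst z = a}"
  proof
    fix z assume "z \<in> \<phi> ` P"
    then obtain w' where w': "w' \<in> P" "z = (a, snd w')" unfolding \<phi>_def by auto
    have "fst w' \<in> Rp F" "(a, snd w') \<in> Dc X act (fst (fst w')) (snd (fst w'))" using w'(1) unfolding P_def by auto
    then have "(a, snd w') \<in> Rp F" using Rp_sat[of "fst (fst w')" "snd (fst w')" F] by simp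
    then show "z \<in> {z \<in> Rp F. fst z = a}" using w'(2) by simp
  qed
  then have "XX closure_of (\<phi> ` P) \<subseteq> XX closure_of {z \<in> Rp F. fst z = a}" by (rule closure_of_mono)
  moreover have "\<phi> w \<in> XX closure_of (\<phi> ` P)"
    using continuous_map_image_closure_subset[OF cphi, of P] imageI[OF w(1), of \<phi>] by (rule subsetD)
  ultimately have 2: "(a,c) \<in> XX closure_of {z \<in> Rp F. fst z = a}" unfolding \<phi>_def c_def by blast
  show ?thesis using 1 2 by blast
qed

lemma Rp_closed:
  assumes Fc: "closedin (prod_topology X K) F"
  shows "closedin XX (Rp F)"
proof -
  have incl: "fiber F p \<subseteq> fiber F q" if ab: "(a,b) \<in> XX closure_of Rp F" and pq: "(p,q) \<in> Dc X act a b" for a b p q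
  proof -
    have "(a,b) \<in> T \<times> T" using closure_of_subset_topspace ab by (metis subsetD topspace_prod_topology)
  then have abT: "a \<in> T" "b \<in> T" by auto
    obtain c where c: "(a,c) \<in> Dc X act a b" "(a,c) \<in> XX closure_of {z \<in> Rp F. fst z = a}"
      using step1[OF ab] by blast
    have "(a,b) \<in> Dc X act a c" by (rule D_min[OF abT c(1)])
    moreover have "c \<in> T" using c(1) D_sub by blast
    ultimately have "Dc X act a b \<subseteq> Dc X act a c" using D_trans abT(1) by blast
    then have "(p,q) \<in> Dc X act a c" using pq by blast
    then show ?thesis using step2[OF Fc abT(1) c(2)] by blast
  qed
  have "XX closure_of Rp F \<subseteq> Rp F"
  proof
    fix z assume z: "z \<in> XX closure_of Rp F"
    obtain a b where zq: "z = (a,b)" by (cases z)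
    have "(a,b) \<in> T \<times> T" using closure_of_subset_topspace z zq by (metis subsetD topspace_prod_topology)
    then have abT: "a \<in> T" "b \<in> T" by auto
    have "fiber F p = fiber F q" if "(p,q) \<in> Dc X act a b" for p q
    proof
      show "fiber F p \<subseteq> fiber F q" using incl z zq that by blast
      have "(b,a) \<in> XX closure_of Rp F" using clRp_sym z zq by blast
      then show "fiber F q \<subseteq> fiber F p" using incl Dc_swap[OF that] by blast
    qed
    then show "z \<in> Rp F" unfolding Rp_def using zq abT by blast
  qed
  moreover have "Rp F \<subseteq> topspace XX" unfolding Rp_def by auto
  ultimately show ?thesis using closure_of_subset_eq by blast
qed

end



locale qsys = eqmin +
  fixes R :: "('a \<times> 'a) set"
  assumes Req: "equiv T R" and Rcl: "closedin XX R"
    and Rinv: "\<And>x y g. (x,y) \<in> R \<Longrightarrow> (act g x, act g y) \<in> R"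
begin

abbreviation "Q \<equiv> quotient_topology X R"
abbreviation "qa \<equiv> quotient_action R act"
definition "\<pi> x = R `` {x}"

lemma R_sub: "R \<subseteq> T \<times> T" using Req unfolding equiv_def refl_on_def by blast

lemma istop_int: assumes S: "S \<subseteq> T // R" "openin X (\<Union>S)" and U: "U \<subseteq> T // R" "openin X (\<Union>U)"
  shows "S \<inter> U \<subseteq> T // R \<and> openin X (\<Union>(S \<inter> U))"
proof -
  have "\<Union>(S \<inter> U) = \<Union>S \<inter> \<Union>U"
  proof
    show "\<Union>(S \<inter> U) \<subseteq> \<Union>S \<inter> \<Union>U" by blast
    show "\<Union>S \<inter> \<Union>U \<subseteq> \<Union>(S \<inter> U)"
    proof
      fix x assume "x \<in> \<Union>S \<inter> \<Union>U"
      then obtain s u where su: "s \<in> S" "u \<in> U" "x \<in> s" "x \<in> u" by blast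
      have "s = u" using quotient_disj[OF Req, of s u] su S U by blast
      then show "x \<in> \<Union>(S \<inter> U)" using su by blast
    qed
  qed
  then show ?thesis using S U by auto
qed

lemma istop_un: assumes K: "\<forall>K\<in>\<K>. K \<subseteq> T // R \<and> openin X (\<Union>K)"
  shows "\<Union>\<K> \<subseteq> T // R \<and> openin X (\<Union>(\<Union>\<K>))"
proof -
  have "\<Union>(\<Union>\<K>) = \<Union>((\<lambda>K. \<Union>K) ` \<K>)" by blast
  moreover have "openin X (\<Union>((\<lambda>K. \<Union>K) ` \<K>))" using K by (intro openin_Union) blast
  ultimately show ?thesis using K by auto
qed

lemma istop: "istopology (\<lambda>U. U \<subseteq> T // R \<and> openin X (\<Union>U))"
  unfolding istopology_def using istop_int istop_un by blast

lemma openQ: "openin Q U \<longleftrightarrow> U \<subseteq> T // R \<and> openin X (\<Union>U)"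
  unfolding quotient_topology_def using topology_inverse'[OF istop] by simp

lemma topQ: "topspace Q = T // R"
proof -
  have "openin Q (T // R)" unfolding openQ using Req by (simp add: Union_quotient)
  moreover have "\<And>U. openin Q U \<Longrightarrow> U \<subseteq> T // R" unfolding openQ by blast
  ultimately show ?thesis unfolding topspace_def by blast
qed

lemma pi_in: "x \<in> T \<Longrightarrow> \<pi> x \<in> T // R" unfolding \<pi>_def by (rule quotientI)

lemma pi_self: "x \<in> T \<Longrightarrow> x \<in> \<pi> x" unfolding \<pi>_def using equiv_class_self[OF Req] .

lemma pi_eq: "x \<in> T \<Longrightarrow> y \<in> T \<Longrightarrow> \<pi> x = \<pi> y \<longleftrightarrow> (x,y) \<in> R"
  unfolding \<pi>_def by (rule eq_equiv_class_iff[OF Req])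

lemma class_pi: "c \<in> T // R \<Longrightarrow> x \<in> c \<Longrightarrow> c = \<pi> x \<and> x \<in> T"
proof -
  assume c: "c \<in> T // R" and x: "x \<in> c"
  obtain z where z: "c = R `` {z}" "z \<in> T" using c by (rule quotientE)
  have zx: "(z,x) \<in> R" using z x by simp
  then have xT: "x \<in> T" using R_sub by blast
  have "\<pi> z = \<pi> x" using pi_eq[OF z(2) xT] zx by simp
  then show ?thesis using z xT unfolding \<pi>_def by simp
qed

lemma class_ex: "c \<in> T // R \<Longrightarrow> \<exists>x\<in>T. c = \<pi> x"
  unfolding \<pi>_def by (erule quotientE) blast

lemma pi_surj: "\<pi> ` T = T // R"
  using pi_in class_ex by blast

lemma pi_preimage: "U \<subseteq> T // R \<Longrightarrow> {x \<in> T. \<pi> x \<in> U} = \<Union>U"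
proof
  assume U: "U \<subseteq> T // R"
  show "{x \<in> T. \<pi> x \<in> U} \<subseteq> \<Union>U" using pi_self by blast
  show "\<Union>U \<subseteq> {x \<in> T. \<pi> x \<in> U}"
  proof
    fix x assume "x \<in> \<Union>U"
    then obtain u where u: "u \<in> U" "x \<in> u" by blast
    then have "u = \<pi> x \<and> x \<in> T" using class_pi U by blast
    then show "x \<in> {x \<in> T. \<pi> x \<in> U}" using u by simp
  qed
qed

lemma pi_cont: "continuous_map X Q \<pi>"
  unfolding continuous_map_def
proof (intro conjI allI impI)
  show "\<pi> \<in> T \<rightarrow> topspace Q" using pi_in topQ by auto
  fix U assume "openin Q U"
  then have U: "U \<subseteq> T // R" "openin X (\<Union>U)" unfolding openQ by auto
  show "openin X {x \<in> T. \<pi> x \<in> U}" using pi_preimage[OF U(1)] U(2) by simp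
qed

lemma sat_closed: assumes "closedin X C" shows "closedin X (R `` C)"
proof -
  have "R `` C = snd ` (R \<inter> (C \<times> T))" using R_sub by force
  moreover have "closedin XX (R \<inter> (C \<times> T))"
    using Rcl assms by (intro closedin_Int) (auto simp: closedin_prod_Times_iff)
  ultimately show ?thesis using closed_map_snd[OF cpt, of X] unfolding closed_map_def by metis
qed

lemma pi_closed_map: "closed_map X Q \<pi>"
  unfolding closed_map_def
proof (intro allI impI)
  fix C assume C: "closedin X C"
  have CT: "C \<subseteq> T" using closedin_subset[OF C] .
  have sub: "\<pi> ` C \<subseteq> topspace Q" using pi_in CT topQ by auto
  have "\<Union>(T // R - \<pi> ` C) = T - R `` C"
  proof
    show "\<Union>(T // R - \<pi> ` C) \<subseteq> T - R `` C"
    proof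
      fix x assume "x \<in> \<Union>(T // R - \<pi> ` C)"
      then obtain u where u: "u \<in> T // R" "u \<notin> \<pi> ` C" "x \<in> u" by blast
      then have ux: "u = \<pi> x" "x \<in> T" using class_pi by blast+
      have "x \<notin> R `` C"
      proof
        assume "x \<in> R `` C"
        then obtain c where c: "c \<in> C" "(c,x) \<in> R" by blast
        then have "\<pi> c = \<pi> x" using pi_eq CT ux(2) by blast
        then show False using u(2) ux(1) c(1) by (metis image_eqI)
      qed
      then show "x \<in> T - R `` C" using ux by blast
    qed
    show "T - R `` C \<subseteq> \<Union>(T // R - \<pi> ` C)"
    proof
      fix x assume x: "x \<in> T - R `` C"
      have "\<pi> x \<notin> \<pi> ` C"
      proof
        assume "\<pi> x \<in> \<pi> ` C"
        then obtain c where c: "c \<in> C" "\<pi> x = \<pi> c" by blast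
        then have "(c,x) \<in> R" using pi_eq CT x by (metis DiffD1 subsetD)
        then show False using x c(1) by blast
      qed
      then show "x \<in> \<Union>(T // R - \<pi> ` C)" using x pi_in pi_self by blast
    qed
  qed
  moreover have "openin X (T - R `` C)" using sat_closed[OF C] by (simp add: openin_diff)
  ultimately have "openin Q (topspace Q - \<pi> ` C)" unfolding openQ topQ by auto
  then show "closedin Q (\<pi> ` C)" using sub by (simp add: closedin_def)
qed

lemma cptQ: "compact_space Q"
  using cpt pi_cont pi_surj topQ unfolding compact_space_def by (metis image_compactin)

lemma hausQ: "Hausdorff_space Q"
proof -
  have "normal_space X" using cpt haus compact_Hausdorff_or_regular_imp_normal_space by blast
  then show ?thesis
    using normal_Hausdorff_space_closed_continuous_map_image[OF _ haus pi_closed_map pi_cont] pi_surj topQ by auto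
qed

lemma qa_pi: assumes "x \<in> T" shows "qa g (\<pi> x) = \<pi> (act g x)"
proof -
  have "\<And>y. y \<in> \<pi> x \<Longrightarrow> R `` {act g y} = \<pi> (act g x)"
  proof -
    fix y assume "y \<in> \<pi> x"
    then have "(x,y) \<in> R" unfolding \<pi>_def by simp
    then have "(act g x, act g y) \<in> R" by (rule Rinv)
    then have "\<pi> (act g y) = \<pi> (act g x)" using pi_eq R_sub
      by (metis SigmaD1 SigmaD2 subsetD)
    then show "R `` {act g y} = \<pi> (act g x)" unfolding \<pi>_def by simp
  qed
  moreover have "\<pi> x \<noteq> {}" using pi_self assms by blast
  ultimately show ?thesis unfolding quotient_action_def by auto
qed

end



context qsys begin

lemma class_closed: "c \<in> T // R \<Longrightarrow> closedin X c"
proof -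
  assume c: "c \<in> T // R"
  obtain z where z: "c = R `` {z}" "z \<in> T" using c by (rule quotientE)
  have "closedin X {z}" using haus z(2) by (rule closedin_Hausdorff_singleton)
  then show ?thesis using sat_closed z(1) by simp
qed

lemma pi_proper: "proper_map X Q \<pi>"
  unfolding proper_map_def
proof (intro conjI ballI)
  show "closed_map X Q \<pi>" by (rule pi_closed_map)
  fix c assume "c \<in> topspace Q"
  then have c: "c \<in> T // R" using topQ by simp
  have "{x \<in> T. \<pi> x = c} = c" using class_pi[OF c] pi_self by blast
  then show "compactin X {x \<in> T. \<pi> x = c}" using class_closed[OF c] cpt closedin_compact_space by simp
qed

lemma joint_Q: "continuous_map (prod_topology euclidean Q) Q (\<lambda>(g, c). qa g c)"
proof -
  let ?\<rho> = "\<lambda>(x,y). (id x, \<pi> y)"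
  have pr: "proper_map (prod_topology (euclidean::'b topology) X) (prod_topology euclidean Q) ?\<rho>"
    using proper_map_prod[of "euclidean::'b topology" X euclidean Q id \<pi>] pi_proper proper_map_id by blast
  have co: "continuous_map (prod_topology (euclidean::'b topology) X) (prod_topology euclidean Q) ?\<rho>"
    unfolding case_prod_unfold id_def
    by (intro continuous_map_pairedI continuous_map_fst continuous_map_compose[OF continuous_map_snd pi_cont, unfolded comp_def])
  have su: "?\<rho> ` topspace (prod_topology (euclidean::'b topology) X) = topspace (prod_topology euclidean Q)"
  proof
    show "?\<rho> ` topspace (prod_topology (euclidean::'b topology) X) \<subseteq> topspace (prod_topology euclidean Q)"
      using pi_in topQ by auto
    show "topspace (prod_topology euclidean Q) \<subseteq> ?\<rho> ` topspace (prod_topology (euclidean::'b topology) X)"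
    proof
      fix z assume z: "z \<in> topspace (prod_topology (euclidean::'b topology) Q)"
      obtain g c where gc: "z = (g,c)" by (cases z)
      have "c \<in> T // R" using z gc topQ by simp
      then obtain x where x: "x \<in> T" "c = \<pi> x" using class_ex by blast
      show "z \<in> ?\<rho> ` topspace (prod_topology (euclidean::'b topology) X)"
        using x gc by (intro image_eqI[where x="(g,x)"]) auto
    qed
  qed
  have qm: "quotient_map (prod_topology (euclidean::'b topology) X) (prod_topology euclidean Q) ?\<rho>"
    using pr co su perfect_imp_quotient_map unfolding perfect_map_def by blast
  have c1: "continuous_map (prod_topology (euclidean::'b topology) X) Q (\<pi> \<circ> (\<lambda>(g, x). act g x))"
    using continuous_map_compose[OF jcont pi_cont] .
  have c2: "continuous_map (prod_topology (euclidean::'b topology) X) Q ((\<lambda>(g, c). qa g c) \<circ> ?\<rho>)"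
  proof (rule continuous_map_eq[OF c1])
    fix z assume "z \<in> topspace (prod_topology (euclidean::'b topology) X)"
    then have "snd z \<in> T" by auto
    then show "(\<pi> \<circ> (\<lambda>(g, x). act g x)) z = ((\<lambda>(g, c). qa g c) \<circ> ?\<rho>) z"
      using qa_pi by (cases z) auto
  qed
  show ?thesis by (rule continuous_compose_quotient_map[OF qm c2])
qed

lemma tdsQ: "tds Q qa"
  unfolding tds_def
proof (intro conjI allI impI ballI)
  show "compact_space Q" by (rule cptQ)
  show "Hausdorff_space Q" by (rule hausQ)
  show "continuous_map (prod_topology euclidean Q) Q (\<lambda>(g, x). qa g x)" by (rule joint_Q)
  fix g c assume "c \<in> topspace Q"
  then obtain x where x: "x \<in> T" "c = \<pi> x" using class_ex topQ by auto
  show "qa g c \<in> topspace Q" using x qa_pi act_in pi_in topQ by simp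
next
  fix c assume "c \<in> topspace Q"
  then obtain x where x: "x \<in> T" "c = \<pi> x" using class_ex topQ by auto
  show "qa 0 c = c" using x qa_pi act0 by simp
next
  fix g h c assume "c \<in> topspace Q"
  then obtain x where x: "x \<in> T" "c = \<pi> x" using class_ex topQ by auto
  show "qa (g + h) c = qa g (qa h c)" using x qa_pi act_add act_in by simp
qed

lemma orbit_Q: "x \<in> T \<Longrightarrow> orbit qa (\<pi> x) = \<pi> ` orbit act x"
  unfolding orbit_def using qa_pi by (auto simp: image_image)

lemma orbit_cl_Q: assumes "x \<in> T" shows "Q closure_of orbit qa (\<pi> x) = topspace Q"
proof
  show "Q closure_of orbit qa (\<pi> x) \<subseteq> topspace Q" by (rule closure_of_subset_topspace)
  have "\<pi> ` (X closure_of orbit act x) \<subseteq> Q closure_of (\<pi> ` orbit act x)"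
    by (rule continuous_map_image_closure_subset[OF pi_cont])
  moreover have "X closure_of orbit act x = T" using minl assms unfolding minimal_action_def by blast
  ultimately show "topspace Q \<subseteq> Q closure_of orbit qa (\<pi> x)" using orbit_Q[OF assms] pi_surj topQ by simp
qed

lemma minQ: "minimal_action Q qa"
  unfolding minimal_action_def
proof
  fix c assume "c \<in> topspace Q"
  then obtain x where x: "x \<in> T" "c = \<pi> x" using class_ex topQ by auto
  show "Q closure_of orbit qa c = topspace Q" using orbit_cl_Q x by simp
qed

end



context qsys begin

abbreviation "QQ \<equiv> prod_topology Q Q"

lemma pipi_cont: "continuous_map XX QQ (\<lambda>z. (\<pi> (fst z), \<pi> (snd z)))"
  by (intro continuous_map_pairedI continuous_map_compose[OF continuous_map_fst pi_cont, unfolded comp_def]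
      continuous_map_compose[OF continuous_map_snd pi_cont, unfolded comp_def])

lemma hausQQ: "Hausdorff_space QQ" using hausQ by (simp add: Hausdorff_space_prod_topology)

lemma no_bad:
  assumes U: "openin QQ U" "\<forall>c\<in>topspace Q. (c,c) \<in> U"
    and x0: "x0 \<in> T"
  shows "(\<pi> x0, \<pi> x0) \<notin> QQ closure_of {z \<in> topspace QQ. \<exists>g. (qa g (fst z), qa g (snd z)) \<notin> U}"
proof
  define Bad where "Bad = {z \<in> topspace QQ. \<exists>g. (qa g (fst z), qa g (snd z)) \<notin> U}"
  let ?pp = "\<lambda>z. (\<pi> (fst z), \<pi> (snd z))"
  assume "(\<pi> x0, \<pi> x0) \<in> QQ closure_of {z \<in> topspace QQ. \<exists>g. (qa g (fst z), qa g (snd z)) \<notin> U}"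
  then have inB: "(\<pi> x0, \<pi> x0) \<in> QQ closure_of Bad" unfolding Bad_def .
  define Bad' where "Bad' = {z \<in> T \<times> T. ?pp z \<in> Bad}"
  have imB: "?pp ` Bad' = Bad"
  proof
    show "?pp ` Bad' \<subseteq> Bad" unfolding Bad'_def by auto
    show "Bad \<subseteq> ?pp ` Bad'"
    proof
      fix z assume z: "z \<in> Bad"
      then have zt: "z \<in> topspace QQ" unfolding Bad_def by simp
      then have f1: "fst z \<in> T // R" and f2: "snd z \<in> T // R" using topQ by (simp_all add: mem_Times_iff)
      obtain x where x: "x \<in> T" "fst z = \<pi> x" using class_ex[OF f1] by blast
      obtain y where y: "y \<in> T" "snd z = \<pi> y" using class_ex[OF f2] by blast
      have e: "z = ?pp (x,y)" using x y by (simp add: prod_eq_iff)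
      moreover have "(x,y) \<in> Bad'" unfolding Bad'_def using x y z e by simp
      ultimately show "z \<in> ?pp ` Bad'" by (rule image_eqI)
    qed
  qed
  have B'sub: "Bad' \<subseteq> topspace XX" unfolding Bad'_def by auto
  have "?pp ` (XX closure_of Bad') = QQ closure_of (?pp ` Bad')"
    by (rule closure_image_compact[OF pipi_cont cpt2 hausQQ B'sub])
  then have "(\<pi> x0, \<pi> x0) \<in> ?pp ` (XX closure_of Bad')" using inB imB by simp
  then obtain z where z: "z \<in> XX closure_of Bad'" "?pp z = (\<pi> x0, \<pi> x0)" by auto
  define x where "x = fst z"
  define y where "y = snd z"
  have zxy: "z = (x,y)" unfolding x_def y_def by simp
  have xyT: "x \<in> T" "y \<in> T" using z(1) closure_of_subset_topspace zxy by (metis SigmaD1 SigmaD2 subsetD topspace_prod_topology)+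
  have "\<pi> x = \<pi> y" using z(2) zxy by simp
  then have xyR: "(x,y) \<in> R" using pi_eq[OF xyT] by simp
  define U' where "U' = {z \<in> topspace XX. ?pp z \<in> U}"
  have oU': "openin XX U'" unfolding U'_def by (rule openin_continuous_map_preimage[OF pipi_cont U(1)])
  let ?Y = "prod_topology XX XX"
  define Cl where "Cl = {w \<in> topspace ?Y. (snd (fst w), snd (snd w)) \<in> topspace XX - U'}
      \<inter> {w \<in> topspace ?Y. (fst (fst w), fst (snd w)) \<in> R}"
  have c24: "continuous_map ?Y XX (\<lambda>w. (snd (fst w), snd (snd w)))" by (intro continuous_intros)
  have c13: "continuous_map ?Y XX (\<lambda>w. (fst (fst w), fst (snd w)))" by (intro continuous_intros)
  have clCl: "closedin ?Y Cl" unfolding Cl_def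
    by (intro closedin_Int closedin_continuous_map_preimage[OF c24] closedin_continuous_map_preimage[OF c13] Rcl) (metis closedin_diff closedin_topspace oU' topspace_prod_topology)
  define Ob where "Ob = topspace ?Y - Cl"
  have oO: "openin ?Y Ob" unfolding Ob_def using clCl closedin_def by blast
  have RR: "R \<times> R \<subseteq> Ob"
  proof
    fix w assume w: "w \<in> R \<times> R"
    obtain s u t v where wq: "w = ((s,u),(t,v))" by (metis prod.collapse)
    have r: "(s,u) \<in> R" "(t,v) \<in> R" using w wq by auto
    have T4: "s \<in> T" "u \<in> T" "t \<in> T" "v \<in> T" using r R_sub by auto
    have "w \<notin> Cl"
    proof
      assume "w \<in> Cl"
      then have st: "(s,t) \<in> R" and nu: "(u,v) \<notin> U'" unfolding Cl_def wq using T4 by auto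
      have "\<pi> u = \<pi> s" "\<pi> s = \<pi> t" "\<pi> t = \<pi> v" using pi_eq T4 r st by (metis equiv_class_eq_iff Req \<pi>_def)+
      then have "?pp (u,v) = (\<pi> u, \<pi> u)" by simp
      moreover have "\<pi> u \<in> topspace Q" using pi_in T4 topQ by simp
      ultimately have "(u,v) \<in> U'" unfolding U'_def using U(2) T4 by simp
      then show False using nu by simp
    qed
    then show "w \<in> Ob" unfolding Ob_def using wq T4 by simp
  qed
  have cR: "compactin XX R" using closedin_compact_space[OF cpt2 Rcl] .
  obtain A B where AB: "openin XX A" "openin XX B" "R \<subseteq> A" "R \<subseteq> B" "A \<times> B \<subseteq> Ob"
    using Wallace_theorem_prod_topology[OF cR cR oO RR] by metis
  have oW: "openin XX (A \<inter> B)" using AB(1,2) by (rule openin_Int)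
  have dW: "\<forall>z\<in>T. (z,z) \<in> A \<inter> B" using AB(3,4) Req unfolding equiv_def refl_on_def by blast
  obtain V where V: "openin XX V" "\<forall>z\<in>T. (z,z) \<in> V" "\<And>g x y. (x,y) \<in> V \<Longrightarrow> (act g x, act g y) \<in> A \<inter> B"
    by (rule equi_get[OF oW dW]) blast
  have xx: "(x,x) \<in> V" using V(2) xyT by blast
  obtain P1 P1' where P1: "openin X P1" "openin X P1'" "x \<in> P1" "x \<in> P1'" "P1 \<times> P1' \<subseteq> V"
    by (rule box_at[OF V(1) xx])
  have yy: "(y,y) \<in> V" using V(2) xyT by blast
  obtain P2 P2' where P2: "openin X P2" "openin X P2'" "y \<in> P2" "y \<in> P2'" "P2 \<times> P2' \<subseteq> V"
    by (rule box_at[OF V(1) yy])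
  have oP: "openin XX (P1' \<times> P2')" using P1(2) P2(2) by (simp add: openin_prod_Times_iff)
  have xyP: "(x,y) \<in> P1' \<times> P2'" using P1(4) P2(4) by simp
  have allT: "\<forall>T'. (x,y) \<in> T' \<and> openin XX T' \<longrightarrow> (\<exists>y. y \<in> Bad' \<and> y \<in> T')"
    using iffD1[OF in_closure_of z(1)[unfolded zxy]] by (rule conjunct2)
  have "\<exists>y. y \<in> Bad' \<and> y \<in> P1' \<times> P2'" using mp[OF spec[OF allT, of "P1' \<times> P2'"] conjI[OF xyP oP]] .
  then obtain z' where z': "z' \<in> Bad'" "z' \<in> P1' \<times> P2'" by (elim exE conjE)
  define x' where "x' = fst z'"
  define y' where "y' = snd z'"
  have z'q: "z' = (x',y')" unfolding x'_def y'_def by simp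
  have x'y': "x' \<in> T" "y' \<in> T" "x' \<in> P1'" "y' \<in> P2'" using z' z'q unfolding Bad'_def by auto
  have "?pp (x',y') \<in> Bad" using z'(1) z'q unfolding Bad'_def by simp
  then obtain g where g: "(qa g (\<pi> x'), qa g (\<pi> y')) \<notin> U" unfolding Bad_def by auto
  then have g': "(\<pi> (act g x'), \<pi> (act g y')) \<notin> U" using qa_pi x'y' by simp
  have nU': "(act g x', act g y') \<notin> U'" unfolding U'_def using g' by simp
  have a1: "(act g x, act g x') \<in> A" using V(3)[of x x' g] P1(3,5) x'y'(3) by blast
  have a2: "(act g y, act g y') \<in> B" using V(3)[of y y' g] P2(3,5) x'y'(4) by blast
  have inO: "((act g x, act g x'), (act g y, act g y')) \<in> Ob" using a1 a2 AB(5) by blast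
  have "((act g x, act g x'), (act g y, act g y')) \<in> Cl"
    unfolding Cl_def using nU' Rinv[OF xyR] act_in xyT x'y' by simp
  then show False using inO unfolding Ob_def by blast
qed

lemma eqQ: "equicontinuous_action Q qa"
  unfolding equicontinuous_action_def
proof (intro allI impI)
  fix U assume U: "openin QQ U \<and> (\<forall>c\<in>topspace Q. (c,c) \<in> U)"
  define Bad where "Bad = {z \<in> topspace QQ. \<exists>g. (qa g (fst z), qa g (snd z)) \<notin> U}"
  define V where "V = topspace QQ - QQ closure_of Bad"
  have oV: "openin QQ V" unfolding V_def by (rule openin_diff[OF openin_topspace closedin_closure_of])
  have dV: "\<forall>c\<in>topspace Q. (c,c) \<in> V"
  proof
    fix c assume c: "c \<in> topspace Q"
    then obtain x where x: "x \<in> T" "c = \<pi> x" using class_ex topQ by auto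
    show "(c,c) \<in> V" unfolding V_def Bad_def using no_bad[OF conjunct1[OF U] conjunct2[OF U] x(1)] x c by simp
  qed
  have gV: "\<forall>g x y. (x, y) \<in> V \<longrightarrow> (qa g x, qa g y) \<in> U"
  proof (intro allI impI)
    fix g x y assume xy: "(x,y) \<in> V"
    have Bs: "Bad \<subseteq> topspace QQ" unfolding Bad_def by blast
    have "(x,y) \<notin> QQ closure_of Bad" "(x,y) \<in> topspace QQ" using xy unfolding V_def by auto
    then have "(x,y) \<notin> Bad" "(x,y) \<in> topspace QQ" using closure_of_subset[OF Bs] by auto
    then show "(qa g x, qa g y) \<in> U" unfolding Bad_def by auto
  qed
  show "\<exists>V. openin QQ V \<and> (\<forall>x\<in>topspace Q. (x, x) \<in> V) \<and> (\<forall>g x y. (x, y) \<in> V \<longrightarrow> (qa g x, qa g y) \<in> U)"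
    using oV dV gV by blast
qed

end



locale full = eqmin +
  fixes K :: "'k topology" and x0 :: 'a and f :: "'a \<Rightarrow> 'k"
  assumes cK: "compact_space K" and hK: "Hausdorff_space K" and sc: "semicocycle X K act x0 f"
begin

abbreviation "F \<equiv> graph_closure X K act x0 f"
abbreviation "Orb \<equiv> orbit act x0"

lemma x0T: "x0 \<in> T" using sc unfolding semicocycle_def by simp
lemma fcont: "continuous_map (subtopology X Orb) K f" using sc unfolding semicocycle_def by simp
lemma Orb_sub: "Orb \<subseteq> T" unfolding orbit_def using act_in x0T by auto
lemma f_in: "y \<in> Orb \<Longrightarrow> f y \<in> topspace K"
  using fcont Orb_sub unfolding continuous_map_def by auto

lemma F_closed: "closedin (prod_topology X K) F" unfolding graph_closure_def by simp

lemma F_sub: "F \<subseteq> T \<times> topspace K" unfolding graph_closure_def using closure_of_subset_topspace by fastforce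

lemma graph_sub: "(\<lambda>x. (x, f x)) ` Orb \<subseteq> topspace (prod_topology X K)"
  using Orb_sub f_in by auto

lemma fiber_orb: assumes y: "y \<in> Orb" shows "fiber F y = {f y}"
proof
  have "(y, f y) \<in> F" unfolding graph_closure_def using closure_of_subset[OF graph_sub] y by blast
  then show "{f y} \<subseteq> fiber F y" unfolding fiber_def by simp
  show "fiber F y \<subseteq> {f y}"
  proof
    fix k assume "k \<in> fiber F y"
    then have yk: "(y,k) \<in> F" unfolding fiber_def by simp
    have kK: "k \<in> topspace K" using yk F_sub by blast
    show "k \<in> {f y}"
    proof (rule ccontr)
      assume "k \<notin> {f y}"
      then have ne: "k \<noteq> f y" by simp
      obtain A B where AB: "openin K A" "openin K B" "k \<in> A" "f y \<in> B" "disjnt A B"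
        using hK kK f_in[OF y] ne unfolding Hausdorff_space_def by metis
      have "openin (subtopology X Orb) {z \<in> topspace (subtopology X Orb). f z \<in> B}"
        using fcont AB(2) by (rule openin_continuous_map_preimage)
      then obtain M where M: "openin X M" "{z \<in> topspace (subtopology X Orb). f z \<in> B} = M \<inter> Orb"
        unfolding openin_subtopology by blast
      have yM: "y \<in> M" using M(2) y Orb_sub AB(4) by auto
      have oMA: "openin (prod_topology X K) (M \<times> A)" using M(1) AB(1) by (simp add: openin_prod_Times_iff)
      have ykM: "(y,k) \<in> M \<times> A" using yM AB(3) by simp
      have allT: "\<forall>T'. (y,k) \<in> T' \<and> openin (prod_topology X K) T' \<longrightarrow> (\<exists>w. w \<in> (\<lambda>x. (x, f x)) ` Orb \<and> w \<in> T')"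
        using iffD1[OF in_closure_of yk[unfolded graph_closure_def]] by (rule conjunct2)
      have "\<exists>w. w \<in> (\<lambda>x. (x, f x)) ` Orb \<and> w \<in> M \<times> A" using mp[OF spec[OF allT, of "M \<times> A"] conjI[OF ykM oMA]] .
      then obtain z where z: "z \<in> Orb" "z \<in> M" "f z \<in> A" by blast
      have "z \<in> M \<inter> Orb" using z by simp
      then have "f z \<in> B" using M(2) by blast
      then show False using z(3) AB(5) unfolding disjnt_def by blast
    qed
  qed
qed

lemma R_eq: "sc_rel X K act x0 f = Rp F"
  unfolding Rp_def by (rule sc_rel_char[OF cpt haus act_in])

lemma R_equiv: "equiv T (sc_rel X K act x0 f)"
  unfolding equiv_def refl_on_def sym_def trans_def sc_rel_def by auto

lemma R_closed: "closedin XX (sc_rel X K act x0 f)"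
  unfolding R_eq by (rule Rp_closed[OF F_closed])

lemma R_inv: assumes "(x,y) \<in> sc_rel X K act x0 f" shows "(act g x, act g y) \<in> sc_rel X K act x0 f"
proof -
  have xy: "x \<in> T" "y \<in> T" using assms unfolding sc_rel_def by auto
  have "(act g x, act g y) \<in> Dc X act x y" by (rule D_inv[OF xy D_self[OF xy]])
  then show ?thesis using Rp_sat assms unfolding R_eq by blast
qed

end

sublocale full \<subseteq> qsys X act "sc_rel X K act x0 f"
  by unfold_locales (use R_equiv R_closed R_inv in auto)




context full begin

abbreviation "RR \<equiv> sc_rel X K act x0 f"
definition "ft c = f (SOME y. y \<in> Orb \<and> \<pi> y = c)"

lemma R_fiber: assumes "(a,b) \<in> RR" shows "fiber F a = fiber F b"
proof -
  have ab: "a \<in> T" "b \<in> T" using assms unfolding sc_rel_def by auto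
  show ?thesis using assms D_self[OF ab] unfolding R_eq Rp_def by auto
qed

lemma ft_pi: assumes y: "y \<in> Orb" shows "ft (\<pi> y) = f y"
proof -
  have ex: "\<exists>y'. y' \<in> Orb \<and> \<pi> y' = \<pi> y" using y by blast
  define y' where "y' = (SOME y'. y' \<in> Orb \<and> \<pi> y' = \<pi> y)"
  have y': "y' \<in> Orb" "\<pi> y' = \<pi> y" unfolding y'_def using someI_ex[OF ex] by blast+
  have "(y',y) \<in> RR" using y' y Orb_sub pi_eq by blast
  then have "fiber F y' = fiber F y" by (rule R_fiber)
  then have "f y' = f y" using fiber_orb y'(1) fiber_orb y by simp
  then show ?thesis unfolding ft_def y'_def[symmetric] .
qed

lemma c0_eq: "RR `` {x0} = \<pi> x0" unfolding \<pi>_def ..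

lemma ft_orbit: "ft (qa g (\<pi> x0)) = f (act g x0)"
  using qa_pi[OF x0T] ft_pi[of "act g x0"] unfolding orbit_def by simp

lemma OrbQ: "orbit qa (\<pi> x0) = \<pi> ` Orb" by (rule orbit_Q[OF x0T])

lemma ft_cont: "continuous_map (subtopology Q (orbit qa (\<pi> x0))) K ft"
  unfolding continuous_map_closedin
proof (intro conjI allI impI)
  show "ft \<in> topspace (subtopology Q (orbit qa (\<pi> x0))) \<rightarrow> topspace K"
    using OrbQ ft_pi f_in by auto
  fix C assume C: "closedin K C"
  define Z where "Z = fst ` (F \<inter> (T \<times> C))"
  have "closedin (prod_topology X K) (F \<inter> (T \<times> C))"
    using F_closed C by (intro closedin_Int) (auto simp: closedin_prod_Times_iff)
  then have Zc: "closedin X Z" unfolding Z_def using closed_map_fst[OF cK, of X] unfolding closed_map_def by blast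
  have Zc2: "closedin Q (\<pi> ` Z)" using pi_closed_map Zc unfolding closed_map_def by blast
  have "{c \<in> topspace (subtopology Q (orbit qa (\<pi> x0))). ft c \<in> C} = \<pi> ` Z \<inter> orbit qa (\<pi> x0)"
  proof (rule set_eqI)
    fix c
    show "c \<in> {c \<in> topspace (subtopology Q (orbit qa (\<pi> x0))). ft c \<in> C} \<longleftrightarrow> c \<in> \<pi> ` Z \<inter> orbit qa (\<pi> x0)"
    proof (cases "c \<in> orbit qa (\<pi> x0)")
      case False then show ?thesis by simp
    next
      case True
      then obtain y where y: "y \<in> Orb" "c = \<pi> y" using OrbQ by auto
      have yT: "y \<in> T" using y Orb_sub by blast
      have cQ: "c \<in> topspace Q" using y yT pi_in topQ by simp
      have "c \<in> \<pi> ` Z \<longleftrightarrow> f y \<in> C"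
      proof
        assume "c \<in> \<pi> ` Z"
        then obtain z where z: "z \<in> Z" "\<pi> z = \<pi> y" using y by auto
        then obtain k where zk: "(z,k) \<in> F" "z \<in> T" "k \<in> C" unfolding Z_def by auto
        have "(z,y) \<in> RR" using pi_eq[OF zk(2) yT] z(2) by simp
        then have fz: "fiber F z = {f y}" using R_fiber fiber_orb[OF y(1)] by simp
        have "k \<in> fiber F z" using zk(1) unfolding fiber_def by simp
        then have "k = f y" using fz by simp
        then show "f y \<in> C" using zk(3) by simp
      next
        assume fy: "f y \<in> C"
        have "f y \<in> fiber F y" using fiber_orb[OF y(1)] by simp
        then have "(y, f y) \<in> F \<inter> (T \<times> C)" using fy yT unfolding fiber_def by simp
        then have "y \<in> Z" unfolding Z_def by force
        then show "c \<in> \<pi> ` Z" using y(2) by blast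
      qed
      then show ?thesis using True cQ y ft_pi by auto
    qed
  qed
  then show "closedin (subtopology Q (orbit qa (\<pi> x0))) {c \<in> topspace (subtopology Q (orbit qa (\<pi> x0))). ft c \<in> C}"
    unfolding closedin_subtopology using Zc2 by blast
qed

lemma semiQ: "semicocycle Q K qa (\<pi> x0) ft"
  unfolding semicocycle_def using x0T pi_in topQ orbit_cl_Q ft_cont by simp

end



context full begin

abbreviation "FQ \<equiv> graph_closure Q K qa (\<pi> x0) ft"
abbreviation "pp \<equiv> (\<lambda>z. (\<pi> (fst z), \<pi> (snd z)))"

lemma DQ: assumes ab: "a \<in> T" "b \<in> T" shows "Dc Q qa (\<pi> a) (\<pi> b) = pp ` Dc X act a b"
proof -
  have "porb qa (\<pi> a) (\<pi> b) = pp ` porb act a b"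
    unfolding porb_def image_image using qa_pi ab by simp
  moreover have "pp ` (XX closure_of porb act a b) = QQ closure_of (pp ` porb act a b)"
    by (rule closure_image_compact[OF pipi_cont cpt2 hausQQ]) (simp add: porb_sub ab)
  ultimately show ?thesis unfolding Dc_def by simp
qed

lemma psi_cont: "continuous_map (prod_topology X K) (prod_topology Q K) (\<lambda>z. (\<pi> (fst z), snd z))"
  by (intro continuous_map_pairedI continuous_map_compose[OF continuous_map_fst pi_cont, unfolded comp_def]
      continuous_map_snd)

lemma FQ_eq: "FQ = (\<lambda>z. (\<pi> (fst z), snd z)) ` F"
proof -
  have gr: "(\<lambda>c. (c, ft c)) ` orbit qa (\<pi> x0) = (\<lambda>z. (\<pi> (fst z), snd z)) ` ((\<lambda>x. (x, f x)) ` Orb)"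
    unfolding OrbQ image_image using ft_pi by simp
  have cXK: "compact_space (prod_topology X K)" using cpt cK by (simp add: compact_space_prod_topology)
  have hQK: "Hausdorff_space (prod_topology Q K)" using hausQ hK by (simp add: Hausdorff_space_prod_topology)
  have "(\<lambda>z. (\<pi> (fst z), snd z)) ` F = prod_topology Q K closure_of ((\<lambda>z. (\<pi> (fst z), snd z)) ` ((\<lambda>x. (x, f x)) ` Orb))"
    unfolding graph_closure_def by (rule closure_image_compact[OF psi_cont cXK hQK graph_sub])
  then show ?thesis unfolding graph_closure_def gr by simp
qed

lemma fibQ: assumes a: "a \<in> T" shows "fiber FQ (\<pi> a) = fiber F a"
proof (rule set_eqI)
  fix k
  show "k \<in> fiber FQ (\<pi> a) \<longleftrightarrow> k \<in> fiber F a"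
  proof
    assume "k \<in> fiber FQ (\<pi> a)"
    then have "(\<pi> a, k) \<in> (\<lambda>z. (\<pi> (fst z), snd z)) ` F" unfolding fiber_def FQ_eq by simp
    then obtain z k' where zk: "(z,k') \<in> F" "\<pi> z = \<pi> a" "k' = k" by force
    have zT: "z \<in> T" using zk(1) F_sub by blast
    have "(z,a) \<in> RR" using pi_eq[OF zT a] zk(2) by simp
    then have "fiber F z = fiber F a" by (rule R_fiber)
    moreover have "k \<in> fiber F z" using zk unfolding fiber_def by simp
    ultimately show "k \<in> fiber F a" by simp
  next
    assume "k \<in> fiber F a"
    then have "(a,k) \<in> F" unfolding fiber_def by simp
    then have "(\<pi> a, k) \<in> (\<lambda>z. (\<pi> (fst z), snd z)) ` F" by force
    then show "k \<in> fiber FQ (\<pi> a)" unfolding fiber_def FQ_eq by simp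
  qed
qed

lemma qa_in: "c \<in> topspace Q \<Longrightarrow> qa g c \<in> topspace Q"
  using tdsQ unfolding tds_def by blast

lemma no_rotQ: "no_rotation Q K qa (\<pi> x0) ft"
  unfolding no_rotation_def
proof -
  have char: "sc_rel Q K qa (\<pi> x0) ft = {(c,d). c \<in> topspace Q \<and> d \<in> topspace Q \<and>
     (\<forall>(p,q)\<in>Dc Q qa c d. fiber FQ p = fiber FQ q)}"
    by (rule sc_rel_char[OF cptQ hausQ qa_in])
  have key: "(c,d) \<in> sc_rel Q K qa (\<pi> x0) ft \<longleftrightarrow> (c,d) \<in> Id_on (topspace Q)" for c d
    proof -
    show "(c,d) \<in> sc_rel Q K qa (\<pi> x0) ft \<longleftrightarrow> (c,d) \<in> Id_on (topspace Q)"
    proof (cases "c \<in> topspace Q \<and> d \<in> topspace Q")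
      case False then show ?thesis unfolding char by auto
    next
      case True
      then have cdq: "c \<in> T // RR" "d \<in> T // RR" using topQ by simp_all
      obtain a where a: "a \<in> T" "c = \<pi> a" using class_ex[OF cdq(1)] by blast
      obtain b where b: "b \<in> T" "d = \<pi> b" using class_ex[OF cdq(2)] by blast
      have ab: "a \<in> T" "b \<in> T" "c = \<pi> a" "d = \<pi> b" using a b by simp_all
      have "(\<forall>(p,q)\<in>Dc Q qa c d. fiber FQ p = fiber FQ q) \<longleftrightarrow> (a,b) \<in> Rp F"
      proof
        assume H: "\<forall>(p,q)\<in>Dc Q qa c d. fiber FQ p = fiber FQ q"
        have "fiber F p = fiber F q" if pq: "(p,q) \<in> Dc X act a b" for p q
        proof -
          have pqT: "p \<in> T" "q \<in> T" using pq D_sub by auto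
          have "pp (p,q) \<in> pp ` Dc X act a b" using pq by (rule imageI)
          then have "(\<pi> p, \<pi> q) \<in> Dc Q qa c d" using DQ[OF ab(1,2)] ab(3,4) by simp
          then have "fiber FQ (\<pi> p) = fiber FQ (\<pi> q)" using bspec[OF H] by fastforce
          then show ?thesis using fibQ pqT by simp
        qed
        then show "(a,b) \<in> Rp F" unfolding Rp_def using ab by auto
      next
        assume abR: "(a,b) \<in> Rp F"
        show "\<forall>(p,q)\<in>Dc Q qa c d. fiber FQ p = fiber FQ q"
        proof (intro ballI, clarify)
          fix p q assume "(p,q) \<in> Dc Q qa c d"
          then have "(p,q) \<in> pp ` Dc X act a b" using DQ[OF ab(1,2)] ab(3,4) by simp
          then obtain z where z: "z \<in> Dc X act a b" "(p,q) = pp z" by (rule imageE)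
          define p' where "p' = fst z"
          define q' where "q' = snd z"
          have pq: "(p',q') \<in> Dc X act a b" "p = \<pi> p'" "q = \<pi> q'" using z unfolding p'_def q'_def by simp_all
          have pqT: "p' \<in> T" "q' \<in> T" using pq D_sub by auto
          have "fiber F p' = fiber F q'" using abR pq(1) unfolding Rp_def by auto
          then show "fiber FQ p = fiber FQ q" using fibQ pqT pq by simp
        qed
      qed
      also have "\<dots> \<longleftrightarrow> c = d" using pi_eq[OF ab(1,2)] ab(3,4) R_eq by simp
      finally show ?thesis unfolding char using True by auto
    qed
  qed
  show "sc_rel Q K qa (\<pi> x0) ft = Id_on (topspace Q)"
  proof (rule set_eqI)
    fix w show "w \<in> sc_rel Q K qa (\<pi> x0) ft \<longleftrightarrow> w \<in> Id_on (topspace Q)" using key[of "fst w" "snd w"] by simp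
  qed
qed

end



theorem mainTheorem6:
  fixes X :: "'a topology" and K :: "'k topology"
    and act :: "'g::topological_group_add \<Rightarrow> 'a \<Rightarrow> 'a"
    and x0 :: 'a and f :: "'a \<Rightarrow> 'k"
  assumes "tds X act" "minimal_action X act" "equicontinuous_action X act"
    and "compact_space K" "Hausdorff_space K"
    and "semicocycle X K act x0 f"
  shows "let R = sc_rel X K act x0 f; Q = quotient_topology X R;
             qa = quotient_action R act; c0 = R `` {x0} in
    tds Q qa \<and> minimal_action Q qa \<and> equicontinuous_action Q qa
    \<and> c0 \<in> topspace Q \<and> Q closure_of orbit qa c0 = topspace Q
    \<and> (\<exists>ft. (\<forall>g. ft (qa g c0) = f (act g x0))
           \<and> semicocycle Q K qa c0 ft \<and> no_rotation Q K qa c0 ft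
           \<and> shift_orbit_closure K (\<lambda>g. ft (qa g c0)) = shift_orbit_closure K (\<lambda>g. f (act g x0)))"
proof -
  interpret full X act K x0 f
    by unfold_locales (use assms in auto)
  have c0: "sc_rel X K act x0 f `` {x0} = \<pi> x0" by (rule c0_eq)
  have fteq: "(\<lambda>g. ft (quotient_action (sc_rel X K act x0 f) act g (\<pi> x0))) = (\<lambda>g. f (act g x0))"
    using ft_orbit by simp
  have ex: "\<exists>ft. (\<forall>g. ft (quotient_action (sc_rel X K act x0 f) act g (\<pi> x0)) = f (act g x0))
           \<and> semicocycle (quotient_topology X (sc_rel X K act x0 f)) K (quotient_action (sc_rel X K act x0 f) act) (\<pi> x0) ft
           \<and> no_rotation (quotient_topology X (sc_rel X K act x0 f)) K (quotient_action (sc_rel X K act x0 f) act) (\<pi> x0) ft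
           \<and> shift_orbit_closure K (\<lambda>g. ft (quotient_action (sc_rel X K act x0 f) act g (\<pi> x0))) = shift_orbit_closure K (\<lambda>g. f (act g x0))"
    using ft_orbit semiQ no_rotQ fteq by (intro exI[of _ ft]) simp
  have top0: "\<pi> x0 \<in> topspace (quotient_topology X (sc_rel X K act x0 f))" using pi_in x0T topQ by simp
  show ?thesis unfolding Let_def c0
    using tdsQ minQ eqQ top0 orbit_cl_Q[OF x0T] ex by blast
qed



end
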